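(* Let $\lambda\in\mathbb{C}$ with $|\lambda|>1$, and let $g,h\in \mathrm{SL}(2,\mathbb{C})$ be $$g=\begin{pmatrix}\lambda&0\\0&\lambda^{-1}\end{pmatrix},\qquad h=\begin{pmatrix}a&b\\c&d\end{pmatrix}.$$ Put $M_g=|\lambda-1|+|\lambda^{-1}-1|$ and suppose $M_g<1$. If the subgroup $\langle g,h\rangle$ is discrete and non-elementary, then each of the following strict inequalities holds: $$|bc|^{1/2}>\frac{1-M_g}{M_g},\qquad |1+bc|^{1/2}>\frac{1-M_g}{M_g},\qquad |1+bc|+|bc|>\frac{2(1-M_g)}{M_g^2}.$$
   Context: A subgroup of $\mathrm{SL}(2,\mathbb{C})$ is discrete if it is discrete in the matrix topology. It is elementary if its action on $\mathbb{H}^3\cup\partial\mathbb{H}^3$ (via Möbius transformations) has a finite orbit; otherwise it is non-elementary. Since $|\lambda|>1$, $g$ is loxodromic. *)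

theory Defs
  imports "HOL-Analysis.Analysis"
begin

type_synonym cmat2 = "complex^2^2"

definition mat2 :: "complex \<Rightarrow> complex \<Rightarrow> complex \<Rightarrow> complex \<Rightarrow> cmat2" where
  "mat2 a b c d = (\<chi> i j. if i = 1 then (if j = 1 then a else b) else (if j = 1 then c else d))"

definition SL2C :: "cmat2 set" where
  "SL2C = {A. det A = 1}"

inductive_set gen_subgroup :: "cmat2 set \<Rightarrow> cmat2 set" for S where
  gen_one: "mat 1 \<in> gen_subgroup S"
| gen_base: "A \<in> S \<Longrightarrow> A \<in> gen_subgroup S"
| gen_inv: "A \<in> S \<Longrightarrow> matrix_inv A \<in> gen_subgroup S"
| gen_mult: "A \<in> gen_subgroup S \<Longrightarrow> B \<in> gen_subgroup S \<Longrightarrow> A ** B \<in> gen_subgroup S"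

definition discrete_group :: "cmat2 set \<Rightarrow> bool" where
  "discrete_group G \<longleftrightarrow> (\<forall>A\<in>G. \<exists>e>0. \<forall>B\<in>G. dist B A < e \<longrightarrow> B = A)"

text \<open>Points of the closed upper half-space model H^3 \<union> \<partial>H^3:
  interior points (z,t) with t > 0, finite boundary points z \<in> C, and \<infinity>.\<close>
datatype hpoint = Inner complex real | Bnd complex | Infty

definition valid_hpoint :: "hpoint \<Rightarrow> bool" where
  "valid_hpoint p = (case p of Inner z t \<Rightarrow> t > 0 | _ \<Rightarrow> True)"

text \<open>Action of a matrix [[a,b],[c,d]] of determinant 1 by the Poincare extension
  of the Moebius transformation z \<mapsto> (az+b)/(cz+d).\<close>
definition mob_act :: "cmat2 \<Rightarrow> hpoint \<Rightarrow> hpoint" where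
  "mob_act A p =
    (let a = A$1$1; b = A$1$2; c = A$2$1; d = A$2$2 in
     case p of
       Inner z t \<Rightarrow>
         (let D = (cmod (c*z+d))\<^sup>2 + (cmod c)\<^sup>2 * t\<^sup>2 in
          Inner (((a*z+b) * cnj (c*z+d) + a * cnj c * complex_of_real (t\<^sup>2)) / complex_of_real D) (t / D))
     | Bnd z \<Rightarrow> (if c*z+d = 0 then Infty else Bnd ((a*z+b)/(c*z+d)))
     | Infty \<Rightarrow> (if c = 0 then Infty else Bnd (a/c)))"

definition elementary :: "cmat2 set \<Rightarrow> bool" where
  "elementary G \<longleftrightarrow> (\<exists>p. valid_hpoint p \<and> finite ((\<lambda>A. mob_act A p) ` G))"

end

theory Submission
  imports Defs
begin


lemma mat2_nth: "mat2 a b c d $ 1 $ 1 = a" "mat2 a b c d $ 1 $ 2 = b"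
   "mat2 a b c d $ 2 $ 1 = c" "mat2 a b c d $ 2 $ 2 = d"
  by (simp_all add: mat2_def)

lemma mat2_eta: "A = mat2 (A$1$1) (A$1$2) (A$2$1) (A$2$2)"
  unfolding mat2_def vec_eq_iff forall_2 by simp

lemma mat2_eq_iff: "mat2 a b c d = mat2 a' b' c' d' \<longleftrightarrow> a = a' \<and> b = b' \<and> c = c' \<and> d = d'"
  by (metis mat2_nth)

lemma mat2_mult: "mat2 a b c d ** mat2 e f g h = mat2 (a*e+b*g) (a*f+b*h) (c*e+d*g) (c*f+d*h)"
  unfolding matrix_matrix_mult_def vec_eq_iff forall_2 by (simp add: sum_2 mat2_def)

lemma mat2_one: "mat 1 = mat2 1 0 0 1"
  unfolding mat_def vec_eq_iff forall_2 by (simp add: mat2_def)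

lemma mat2_det: "det (mat2 a b c d) = a*d - b*c"
  by (simp add: det_2 mat2_nth)

lemma matrix_inv_unique2:
  fixes A B :: cmat2
  assumes "A ** B = mat 1" "B ** A = mat 1"
  shows "matrix_inv A = B"
  unfolding matrix_inv_def
proof (rule some_equality)
  show "A ** B = mat 1 \<and> B ** A = mat 1" using assms by simp
  fix B' :: cmat2 assume "A ** B' = mat 1 \<and> B' ** A = mat 1"
  then have "B' = B' ** (A ** B)" "B' ** A = mat 1" using assms by auto
  then show "B' = B" by (metis matrix_mul_assoc matrix_mul_lid)
qed

lemma mat2_inv: "a*d - b*c = 1 \<Longrightarrow> matrix_inv (mat2 a b c d) = mat2 d (-b) (-c) a"
  by (rule matrix_inv_unique2) (simp_all add: mat2_mult mat2_one algebra_simps mat2_eq_iff)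

lemma dist_vec2: "dist (x::'a::metric_space^2) y \<le> dist (x$1) (y$1) + dist (x$2) (y$2)"
    unfolding dist_vec_def using L2_set_le_sum[of UNIV "\<lambda>i. dist (x$i) (y$i)"] by (simp add: sum_2)

lemma dist_mat2: "dist (mat2 a b c d) (mat2 a' b' c' d') \<le> cmod (a-a') + cmod (b-b') + cmod (c-c') + cmod (d-d')"
proof -
  note v = dist_vec2
  have "dist (mat2 a b c d) (mat2 a' b' c' d') \<le> dist (mat2 a b c d $ 1) (mat2 a' b' c' d' $ 1) + dist (mat2 a b c d $ 2) (mat2 a' b' c' d' $ 2)"
    by (rule v)
  also have "\<dots> \<le> (cmod (a-a') + cmod (b-b')) + (cmod (c-c') + cmod (d-d'))"
    by (intro add_mono order_trans[OF v]) (simp_all add: mat2_nth dist_norm)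
  finally show ?thesis by simp
qed

definition adj2 :: "cmat2 \<Rightarrow> cmat2" where
  "adj2 A = mat2 (A$2$2) (-(A$1$2)) (-(A$2$1)) (A$1$1)"

lemma adj2_mat2[simp]: "adj2 (mat2 a b c d) = mat2 d (-b) (-c) a"
  by (simp add: adj2_def mat2_nth)

lemma adj2_mult: "adj2 (A ** B) = adj2 B ** adj2 A"
  apply (subst (1 2) mat2_eta[of A], subst (1 2) mat2_eta[of B])
  by (simp add: mat2_mult algebra_simps)

lemma adj2_inv: "det A = 1 \<Longrightarrow> matrix_inv A = adj2 A"
  apply (subst (1 2) mat2_eta[of A])
  apply (subst mat2_inv) by (auto simp: det_2 adj2_def mat2_nth)

lemma gen_props:
  assumes "\<forall>A\<in>S. det A = 1" "A \<in> gen_subgroup S"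
  shows "det A = 1 \<and> adj2 A \<in> gen_subgroup S"
  using assms(2)
proof induction
  case gen_one
  then show ?case by (simp add: mat2_one mat2_det gen_subgroup.gen_one[of S, unfolded mat2_one])
next
  case (gen_base A)
  then show ?case using assms(1) adj2_inv[of A] gen_subgroup.gen_inv[of A S] by auto
next
  case (gen_inv A)
  have d: "det A = 1" using gen_inv assms(1) by auto
  have "adj2 (adj2 A) = A" by (subst (1 2) mat2_eta[of A]) simp
  moreover have "det (adj2 A) = 1" using d by (simp add: adj2_def det_2 mat2_nth algebra_simps)
  ultimately show ?case using adj2_inv[OF d] gen_inv gen_subgroup.gen_base by auto
next
  case (gen_mult A B)
  then show ?case by (simp add: det_mul adj2_mult gen_subgroup.gen_mult)
qed

definition stp :: "complex \<Rightarrow> complex \<times> complex \<times> complex \<times> complex \<Rightarrow> complex \<times> complex \<times> complex \<times> complex" where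
  "stp l = (\<lambda>(a,b,c,d). (l*a*d - inverse l*b*c, a*b*(inverse l - l), c*d*(l - inverse l), inverse l*a*d - l*b*c))"

lemma geom0:
  fixes r :: "nat \<Rightarrow> real"
  assumes "\<forall>n\<ge>N. r (Suc n) \<le> q * r n" "\<forall>n. 0 \<le> r n" "0 \<le> q" "q < 1"
  shows "r \<longlonglongrightarrow> 0"
proof -
  have b: "r (k+N) \<le> q^k * r N" for k
  proof (induction k)
    case 0 then show ?case by simp
  next
    case (Suc k)
    have "r (Suc k + N) \<le> q * r (k+N)" using assms(1) by simp
    also have "\<dots> \<le> q * (q^k * r N)" using Suc assms(3) by (simp add: mult_left_mono)
    finally show ?case by simp
  qed
  have "(\<lambda>k. q^k * r N) \<longlonglongrightarrow> 0"
    by (intro tendsto_mult_left_zero LIMSEQ_power_zero) (use assms in auto)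
  then have "(\<lambda>k. r (k+N)) \<longlonglongrightarrow> 0"
    by (rule Lim_null_comparison[rotated]) (use b assms(2) in auto)
  then show ?thesis by (rule LIMSEQ_offset)
qed

lemma conj_pow:
  assumes "\<forall>A\<in>G. \<forall>B\<in>G. A ** B \<in> G" "mat2 l 0 0 (inverse l) \<in> G" "mat2 (inverse l) 0 0 l \<in> G"
    "l \<noteq> 0" "mat2 a b c d \<in> G"
  shows "mat2 a (b * inverse l ^ (2*j)) (c * l ^ (2*j)) d \<in> G"
proof (induction j)
  case 0 then show ?case using assms by simp
next
  case (Suc j)
  have "mat2 (inverse l) 0 0 l ** mat2 a (b * inverse l ^ (2*j)) (c * l ^ (2*j)) d ** mat2 l 0 0 (inverse l) \<in> G"
    using assms Suc by blast
  moreover have "mat2 (inverse l) 0 0 l ** mat2 a (b * inverse l ^ (2*j)) (c * l ^ (2*j)) d ** mat2 l 0 0 (inverse l)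
     = mat2 a (b * inverse l ^ (2*Suc j)) (c * l ^ (2*Suc j)) d"
    using assms(4) by (simp add: mat2_mult mat2_eq_iff field_simps power_add)
  ultimately show ?case by simp
qed

lemma jorg:
  fixes l a b c d :: complex and G :: "cmat2 set"
  assumes closed: "\<forall>A\<in>G. \<forall>B\<in>G. A ** B \<in> G"
  and adjG: "\<forall>A\<in>G. adj2 A \<in> G"
  and gG: "mat2 l 0 0 (inverse l) \<in> G"
  and disc: "discrete_group G"
  and hl: "cmod l > 1"
  and hq: "mat2 a b c d \<in> G" "a*d - b*c = 1"
  and hmu: "(cmod (l - inverse l))\<^sup>2 * (1 + cmod (b*c)) < 1"
  shows "\<exists>n. fst (snd ((stp l ^^ n) (a,b,c,d))) = 0 \<and> fst (snd (snd ((stp l ^^ n) (a,b,c,d)))) = 0"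
proof -
  define s where "s n = (stp l ^^ n) (a,b,c,d)" for n
  define A where "A n = fst (s n)" for n
  define B where "B n = fst (snd (s n))" for n
  define C where "C n = fst (snd (snd (s n)))" for n
  define D where "D n = snd (snd (snd (s n)))" for n
  have sn: "s n = (A n, B n, C n, D n)" for n by (simp add: A_def B_def C_def D_def)
  have sSuc: "s (Suc n) = stp l (s n)" for n by (simp add: s_def)
  have recA: "A (Suc n) = l*A n*D n - inverse l*B n*C n" for n
    using sSuc[of n] by (simp add: sn stp_def)
  have recB: "B (Suc n) = A n*B n*(inverse l - l)" for n
    using sSuc[of n] by (simp add: sn stp_def)
  have recC: "C (Suc n) = C n*D n*(l - inverse l)" for n
    using sSuc[of n] by (simp add: sn stp_def)
  have recD: "D (Suc n) = inverse l*A n*D n - l*B n*C n" for n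
    using sSuc[of n] by (simp add: sn stp_def)
  have s0: "A 0 = a" "B 0 = b" "C 0 = c" "D 0 = d" by (simp_all add: A_def B_def C_def D_def s_def)
  have l0: "l \<noteq> 0" using hl by auto
  have det: "A n * D n - B n * C n = 1" for n
  proof (induction n)
    case 0 then show ?case using hq by (simp add: s0)
  next
    case (Suc n)
    have "A (Suc n) * D (Suc n) - B (Suc n) * C (Suc n) = (A n * D n - B n * C n)^2"
      unfolding recA recB recC recD using l0 by (simp add: field_simps power2_eq_square)
    then show ?case using Suc by simp
  qed
  have memb: "mat2 (A n) (B n) (C n) (D n) \<in> G" for n
  proof (induction n)
    case 0 then show ?case using hq by (simp add: s0)
  next
    case (Suc n)
    have "mat2 (A n) (B n) (C n) (D n) ** mat2 l 0 0 (inverse l) ** adj2 (mat2 (A n) (B n) (C n) (D n)) \<in> G"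
      using closed adjG gG Suc by blast
    moreover have "mat2 (A n) (B n) (C n) (D n) ** mat2 l 0 0 (inverse l) ** adj2 (mat2 (A n) (B n) (C n) (D n))
        = mat2 (A (Suc n)) (B (Suc n)) (C (Suc n)) (D (Suc n))"
      unfolding recA recB recC recD by (simp add: mat2_mult mat2_eq_iff algebra_simps)
    ultimately show ?case by simp
  qed
  define x where "x n = B n * C n" for n
  define \<delta> where "\<delta> = l - inverse l"
  define m where "m = cmod \<delta>"
  have AD: "A n * D n = 1 + x n" for n using det[of n] by (simp add: x_def algebra_simps)
  have xrec: "x (Suc n) = - x n * (1 + x n) * \<delta>\<^sup>2" for n
  proof -
    have "x (Suc n) = - (A n * D n) * x n * \<delta>\<^sup>2"
      unfolding x_def recB recC \<delta>_def by (simp add: power2_eq_square algebra_simps)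
    then show ?thesis using AD[of n] by (simp add: algebra_simps)
  qed
  have Arec: "A (Suc n) = l + \<delta> * x n" for n
    unfolding recA \<delta>_def using AD[of n] l0 unfolding x_def by (simp add: field_simps)
  have Drec: "D (Suc n) = inverse l - \<delta> * x n" for n
    unfolding recD \<delta>_def using AD[of n] l0 unfolding x_def by (simp add: field_simps)
  have "\<delta> \<noteq> 0"
  proof
    assume "\<delta> = 0"
    then have "l * l = 1" using l0 by (simp add: \<delta>_def field_simps)
    then have "cmod l * cmod l = 1" by (metis norm_mult norm_one)
    moreover have "1 * 1 < cmod l * cmod l" by (rule mult_strict_mono) (use hl in auto)
    ultimately show False by simp
  qed
  then have m0: "m > 0" by (simp add: m_def)
  define s0 where "s0 = cmod (x 0)"
  define \<mu> where "\<mu> = m\<^sup>2 * (1 + s0)"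
  have mu1: "\<mu> < 1" using hmu by (simp add: \<mu>_def m_def \<delta>_def s0_def x_def s0)
  have mu0: "\<mu> \<ge> 0" by (simp add: \<mu>_def s0_def)
  have m1: "m < 1"
  proof -
    have "m\<^sup>2 \<le> \<mu>" unfolding \<mu>_def s0_def by (simp add: mult_le_cancel_left1)
    then have "m\<^sup>2 < 1" using mu1 by simp
    then show ?thesis using m0 by (metis abs_of_pos abs_square_less_1)
  qed
  have xb: "cmod (x n) \<le> \<mu>^n * s0" for n
  proof (induction n)
    case 0 then show ?case by (simp add: s0_def)
  next
    case (Suc n)
    have "\<mu>^n * s0 \<le> s0" using mu0 mu1 by (simp add: s0_def mult_left_le_one_le power_le_one)
    then have "cmod (1 + x n) \<le> 1 + s0" using Suc norm_triangle_ineq[of 1 "x n"] by simp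
    have "cmod (x (Suc n)) = cmod (x n) * cmod (1 + x n) * m\<^sup>2"
      by (simp add: xrec m_def norm_mult norm_power)
    also have "\<dots> \<le> (\<mu>^n * s0) * (1 + s0) * m\<^sup>2"
      by (intro mult_right_mono mult_mono Suc \<open>cmod (1 + x n) \<le> 1 + s0\<close>) (use mu0 in \<open>auto simp: s0_def\<close>)
    also have "\<dots> = \<mu>^(Suc n) * s0" by (simp add: \<mu>_def algebra_simps)
    finally show ?case .
  qed
  have x0: "x \<longlonglongrightarrow> 0"
  proof -
    have "(\<lambda>n. \<mu>^n * s0) \<longlonglongrightarrow> 0"
      by (intro tendsto_mult_left_zero LIMSEQ_power_zero) (use mu0 mu1 in auto)
    then show ?thesis by (rule Lim_null_comparison[rotated]) (use xb in auto)
  qed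
  have Alim: "A \<longlonglongrightarrow> l"
  proof -
    have "(\<lambda>n. l + \<delta> * x n) \<longlonglongrightarrow> l + \<delta> * 0" by (intro tendsto_add tendsto_const tendsto_mult x0)
    moreover have "(\<lambda>n. A (Suc n)) = (\<lambda>n. l + \<delta> * x n)" by (simp add: Arec)
    ultimately show ?thesis using LIMSEQ_imp_Suc[of A l] by simp
  qed
  have Dlim: "D \<longlonglongrightarrow> inverse l"
  proof -
    have "(\<lambda>n. inverse l - \<delta> * x n) \<longlonglongrightarrow> inverse l - \<delta> * 0" by (intro tendsto_diff tendsto_const tendsto_mult x0)
    moreover have "(\<lambda>n. D (Suc n)) = (\<lambda>n. inverse l - \<delta> * x n)" by (simp add: Drec)
    ultimately show ?thesis using LIMSEQ_imp_Suc[of D "inverse l"] by simp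
  qed
  define q where "q = (1 + m) / 2"
  have q: "m < q" "q < 1" "0 \<le> q" using m1 m0 by (auto simp: q_def)
  define \<beta> where "\<beta> n = cmod (B n) / cmod l ^ n" for n
  define \<gamma> where "\<gamma> n = cmod (C n) * cmod l ^ n" for n
  have \<beta>rec: "\<beta> (Suc n) = \<beta> n * (cmod (A n) * m / cmod l)" for n
  proof -
    have "cmod (B (Suc n)) = cmod (A n) * cmod (B n) * m" unfolding recB m_def \<delta>_def
      by (simp add: norm_mult norm_minus_commute)
    then show ?thesis using l0 by (simp add: \<beta>_def field_simps)
  qed
  have \<gamma>rec: "\<gamma> (Suc n) = \<gamma> n * (cmod (D n) * m * cmod l)" for n
  proof -
    have "cmod (C (Suc n)) = cmod (C n) * cmod (D n) * m" unfolding recC m_def \<delta>_def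
      by (simp add: norm_mult)
    then show ?thesis using l0 by (simp add: \<gamma>_def field_simps)
  qed
  have \<beta>0: "\<beta> \<longlonglongrightarrow> 0"
  proof -
    have "(\<lambda>n. cmod (A n) * m / cmod l) \<longlonglongrightarrow> cmod l * m / cmod l"
      by (intro tendsto_divide tendsto_mult tendsto_norm Alim tendsto_const) (use l0 in auto)
    then have "(\<lambda>n. cmod (A n) * m / cmod l) \<longlonglongrightarrow> m" using l0 by simp
    from order_tendstoD(2)[OF this q(1)] obtain N where N: "\<forall>n\<ge>N. cmod (A n) * m / cmod l < q"
      unfolding eventually_sequentially by blast
    show ?thesis
    proof (rule geom0[of N \<beta> q])
      show "\<forall>n\<ge>N. \<beta> (Suc n) \<le> q * \<beta> n"
      proof (intro allI impI)
        fix n assume "N \<le> n"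
        then have r: "cmod (A n) * m / cmod l \<le> q" using N by (simp add: less_imp_le)
        have "\<beta> n \<ge> 0" by (simp add: \<beta>_def)
        then show "\<beta> (Suc n) \<le> q * \<beta> n" unfolding \<beta>rec
          using mult_left_mono[OF r, of "\<beta> n"] by (simp add: mult.commute)
      qed
    qed (use q in \<open>auto simp: \<beta>_def\<close>)
  qed
  have \<gamma>0: "\<gamma> \<longlonglongrightarrow> 0"
  proof -
    have "(\<lambda>n. cmod (D n) * m * cmod l) \<longlonglongrightarrow> cmod (inverse l) * m * cmod l"
      by (intro tendsto_mult tendsto_norm Dlim tendsto_const)
    moreover have eq: "cmod (inverse l) * m * cmod l = m" using l0 by (simp add: norm_inverse)
    ultimately have "(\<lambda>n. cmod (D n) * m * cmod l) \<longlonglongrightarrow> m" by simp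
    from order_tendstoD(2)[OF this q(1)] obtain N where N: "\<forall>n\<ge>N. cmod (D n) * m * cmod l < q"
      unfolding eventually_sequentially by blast
    show ?thesis
    proof (rule geom0[of N \<gamma> q])
      show "\<forall>n\<ge>N. \<gamma> (Suc n) \<le> q * \<gamma> n"
      proof (intro allI impI)
        fix n assume "N \<le> n"
        then have r: "cmod (D n) * m * cmod l \<le> q" using N by (simp add: less_imp_le)
        have "\<gamma> n \<ge> 0" by (simp add: \<gamma>_def)
        then show "\<gamma> (Suc n) \<le> q * \<gamma> n" unfolding \<gamma>rec
          using mult_left_mono[OF r, of "\<gamma> n"] by (simp add: mult.commute)
      qed
    qed (use q in \<open>auto simp: \<gamma>_def\<close>)
  qed
  define E where "E n = cmod (A n - l) + \<beta> n + \<gamma> n + cmod (D n - inverse l)" for n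
  have E0: "E \<longlonglongrightarrow> 0"
  proof -
    have "E \<longlonglongrightarrow> cmod (l - l) + 0 + 0 + cmod (inverse l - inverse l)"
      unfolding E_def by (intro tendsto_add tendsto_norm tendsto_diff Alim Dlim tendsto_const \<beta>0 \<gamma>0)
    then show ?thesis by simp
  qed
  have "strict_mono (\<lambda>j::nat. 2*j)" by (simp add: strict_mono_def)
  from LIMSEQ_subseq_LIMSEQ[OF E0 this] have E2: "(\<lambda>j. E (2*j)) \<longlonglongrightarrow> 0" by (simp add: comp_def)
  from disc gG obtain e where e: "e > 0" "\<forall>X\<in>G. dist X (mat2 l 0 0 (inverse l)) < e \<longrightarrow> X = mat2 l 0 0 (inverse l)"
    unfolding discrete_group_def by blast
  from order_tendstoD(2)[OF E2 e(1)] obtain j where j: "E (2*j) < e"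
    unfolding eventually_sequentially by blast
  define X where "X = mat2 (A (2*j)) (B (2*j) * inverse l ^ (2*j)) (C (2*j) * l ^ (2*j)) (D (2*j))"
  have "adj2 (mat2 l 0 0 (inverse l)) \<in> G" using adjG gG by blast
  then have ginv: "mat2 (inverse l) 0 0 l \<in> G" by simp
  have XG: "X \<in> G" unfolding X_def
    by (rule conj_pow[OF closed gG ginv l0 memb])
  have "dist X (mat2 l 0 0 (inverse l)) \<le> E (2*j)"
    unfolding X_def E_def \<beta>_def \<gamma>_def
    by (rule order_trans[OF dist_mat2]) (simp add: norm_mult norm_power norm_inverse divide_inverse power_inverse)
  then have "X = mat2 l 0 0 (inverse l)" using e j XG by auto
  then have "B (2*j) = 0 \<and> C (2*j) = 0" using l0 by (simp add: X_def mat2_eq_iff)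
  then show ?thesis by (auto simp: B_def C_def s_def)
qed



lemma fin1:
  fixes m M s :: real
  assumes "0<m" "m \<le> M" "M<1" "s \<ge> 0" "m\<^sup>2*(1+s) \<ge> 1"
  shows "sqrt s > (1-M)/M"
proof -
  have M0: "M > 0" using assms by linarith
  have "M\<^sup>2*(1+s) \<ge> 1"
    using assms(5) power_mono[OF assms(2), of 2] assms(1,4)
    by (smt (verit) mult_right_mono)
  then have "M\<^sup>2 * s \<ge> 1 - M\<^sup>2" by (simp add: algebra_simps)
  moreover have "1 - M\<^sup>2 > (1-M)\<^sup>2" using M0 assms(3) by (simp add: power2_eq_square algebra_simps)
  ultimately have "(1-M)\<^sup>2 < M\<^sup>2 * s" by linarith
  then have "((1-M)/M)\<^sup>2 < s" using M0 by (simp add: power_divide field_simps)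
  then show ?thesis by (rule real_less_rsqrt)
qed

lemma fin2:
  fixes m M s u :: real
  assumes "0<m" "m \<le> M" "M<1" "s \<ge> 0" "u \<ge> 0" "s \<le> 1+u" "m\<^sup>2*(1+s*u*m\<^sup>2) \<ge> 1"
  shows "sqrt u > (1-M)/M"
proof (rule ccontr)
  assume "\<not> ?thesis"
  then have su: "sqrt u \<le> (1-M)/M" by simp
  have M0: "M > 0" using assms by linarith
  define r where "r = (1-M)/M"
  have r0: "r \<ge> 0" using M0 assms by (simp add: r_def)
  have "(sqrt u)\<^sup>2 \<le> r\<^sup>2" using su r0 unfolding r_def[symmetric]
    by (intro power_mono) (use assms(5) in auto)
  then have ur: "u \<le> r\<^sup>2" using assms(5) by simp
  have mM2: "m\<^sup>2 \<le> M\<^sup>2" using power_mono[OF assms(2), of 2] assms(1) by simp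
  have "1 \<le> m\<^sup>2 + (m\<^sup>2)\<^sup>2 * (s*u)" using assms(7) by (simp add: algebra_simps power2_eq_square)
  also have "\<dots> \<le> M\<^sup>2 + (M\<^sup>2)\<^sup>2 * ((1+u)*u)"
    by (intro add_mono mult_mono power_mono mM2) (use assms in auto)
  also have "\<dots> \<le> M\<^sup>2 + (M\<^sup>2)\<^sup>2 * ((1+r\<^sup>2)*r\<^sup>2)"
    by (intro add_mono mult_left_mono mult_mono ur) (use assms in auto)
  also have "\<dots> = M\<^sup>2 + (1-M)\<^sup>2 * (M\<^sup>2 + (1-M)\<^sup>2)"
  proof -
    have Mr: "M*r = 1-M" using M0 by (simp add: r_def)
    have "(M\<^sup>2)\<^sup>2 * ((1+r\<^sup>2)*r\<^sup>2) = M\<^sup>2*(M*r)\<^sup>2 + (M*r)\<^sup>2*(M*r)\<^sup>2" by algebra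
    then show ?thesis unfolding Mr by (simp add: algebra_simps)
  qed
  finally have A: "1 \<le> M\<^sup>2 + (1-M)\<^sup>2 * (M\<^sup>2 + (1-M)\<^sup>2)" .
  have "M\<^sup>2 + (1-M)\<^sup>2 = 1 - 2*(M*(1-M))" by (simp add: power2_eq_square algebra_simps)
  moreover have "M*(1-M) \<ge> 0" using M0 assms(3) by simp
  ultimately have B1: "M\<^sup>2 + (1-M)\<^sup>2 \<le> 1" by linarith
  have "(1-M)\<^sup>2 * (M\<^sup>2 + (1-M)\<^sup>2) \<le> (1-M)\<^sup>2" using B1 by (simp add: mult_left_le)
  moreover have "(1-M)\<^sup>2 < 1 - M\<^sup>2" using M0 assms(3) by (simp add: power2_eq_square algebra_simps)
  ultimately show False using A by linarith
qed

lemma fin3: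
  fixes m M s u :: real
  assumes "0<m" "m \<le> M" "M<1" "s \<ge> 0" "u \<ge> 0" "m\<^sup>2*(1+s*u*m\<^sup>2) \<ge> 1"
  shows "u + s > 2*(1-M)/M\<^sup>2"
proof (rule ccontr)
  assume "\<not> ?thesis"
  then have h: "u + s \<le> 2*(1-M)/M\<^sup>2" by simp
  have M0: "M > 0" using assms by linarith
  have mM2: "m\<^sup>2 \<le> M\<^sup>2" using power_mono[OF assms(2), of 2] assms(1) by simp
  have "1 \<le> m\<^sup>2 + (m\<^sup>2)\<^sup>2 * (s*u)" using assms(6) by (simp add: algebra_simps power2_eq_square)
  also have "\<dots> \<le> M\<^sup>2 + (M\<^sup>2)\<^sup>2 * (s*u)"
    by (intro add_mono mult_right_mono power_mono mM2) (use assms in auto)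
  finally have A: "1 - M\<^sup>2 \<le> (M\<^sup>2)\<^sup>2 * (s*u)" by simp
  have "(u+s)\<^sup>2 = (u-s)\<^sup>2 + 4*(s*u)" by (simp add: power2_eq_square algebra_simps)
  then have "4*(s*u) \<le> (u+s)\<^sup>2" using zero_le_power2[of "u-s"] by linarith
  also have "\<dots> \<le> (2*(1-M)/M\<^sup>2)\<^sup>2" by (rule power_mono[OF h]) (use assms in auto)
  finally have t: "4*(s*u) \<le> (2*(1-M)/M\<^sup>2)\<^sup>2" .
  have "(M\<^sup>2)\<^sup>2*(4*(s*u)) \<le> (M\<^sup>2)\<^sup>2*(2*(1-M)/M\<^sup>2)\<^sup>2"
    by (rule mult_left_mono[OF t]) simp
  also have "\<dots> = (M\<^sup>2*(2*(1-M)/M\<^sup>2))\<^sup>2" by algebra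
  also have "M\<^sup>2*(2*(1-M)/M\<^sup>2) = 2*(1-M)" using M0 by simp
  finally have q4: "4*((M\<^sup>2)\<^sup>2 * (s*u)) \<le> 4*(1-M)\<^sup>2" by (simp add: power2_eq_square algebra_simps)
  then have "(M\<^sup>2)\<^sup>2 * (s*u) \<le> (1-M)\<^sup>2" by linarith
  moreover have "(1-M)\<^sup>2 < 1 - M\<^sup>2" using M0 assms(3) by (simp add: power2_eq_square algebra_simps)
  ultimately show False using A by linarith
qed



lemma lfacts:
  fixes l :: complex assumes "cmod l > 1"
  shows "l \<noteq> 0" "l - inverse l \<noteq> 0" "inverse l - l \<noteq> 0" "l + inverse l \<noteq> 0"
proof -
  show l0: "l \<noteq> 0" using assms by auto
  have gt: "1 * 1 < cmod l * cmod l" by (rule mult_strict_mono) (use assms in auto)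
  have g2: "cmod (l*l) > 1" using gt by (simp add: norm_mult)
  have *: "l * l \<noteq> 1" "l * l \<noteq> -1"
    using g2 by auto
  show "l - inverse l \<noteq> 0"
  proof
    assume "l - inverse l = 0" then have "l * l = 1" using l0 by (simp add: field_simps)
    then show False using * by simp
  qed
  then show "inverse l - l \<noteq> 0" by (metis minus_diff_eq neg_equal_0_iff_equal)
  show "l + inverse l \<noteq> 0"
  proof
    assume "l + inverse l = 0" then have "l * l = -1" using l0 by (simp add: field_simps add_eq_0_iff)
    then show False using * by simp
  qed
qed

lemma stp_det:
  assumes "a*d - b*c = (1::complex)" "l \<noteq> 0"
  shows "(l*a*d - inverse l*b*c) * (inverse l*a*d - l*b*c) - (a*b*(inverse l - l)) * (c*d*(l - inverse l)) = 1"
proof -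
  have "(l*a*d - inverse l*b*c) * (inverse l*a*d - l*b*c) - (a*b*(inverse l - l)) * (c*d*(l - inverse l)) = (a*d-b*c)^2"
    using assms(2) by (simp add: field_simps power2_eq_square)
  then show ?thesis using assms(1) by simp
qed

lemma back_lem:
  assumes "cmod l > 1"
  shows "a*d - b*c = 1 \<Longrightarrow> fst (snd ((stp l ^^ n) (a,b,c,d))) = 0 \<Longrightarrow> fst (snd (snd ((stp l ^^ n) (a,b,c,d)))) = 0
    \<Longrightarrow> (b=0 \<and> c=0) \<or> (a=0 \<and> d=0)"
proof (induction n arbitrary: a b c d)
  case 0 then show ?case by simp
next
  case (Suc n)
  note lf = lfacts[OF assms]
  define a' where "a' = l*a*d - inverse l*b*c"
  define b' where "b' = a*b*(inverse l - l)"
  define c' where "c' = c*d*(l - inverse l)"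
  define d' where "d' = inverse l*a*d - l*b*c"
  have st: "stp l (a,b,c,d) = (a',b',c',d')" by (simp add: stp_def a'_def b'_def c'_def d'_def)
  have det': "a'*d' - b'*c' = 1" unfolding a'_def b'_def c'_def d'_def by (rule stp_det[OF Suc.prems(1) lf(1)])
  have "(b'=0 \<and> c'=0) \<or> (a'=0 \<and> d'=0)"
    using Suc.IH[OF det'] Suc.prems(2,3) by (simp add: funpow_Suc_right st del: funpow.simps)
  moreover have "a' + d' \<noteq> 0"
  proof -
    have "a' + d' = (l + inverse l) * (a*d - b*c)" by (simp add: a'_def d'_def algebra_simps)
    then show ?thesis using lf Suc.prems(1) by simp
  qed
  ultimately have "b' = 0" "c' = 0" by auto
  then have "a*b = 0" "c*d = 0" using lf by (auto simp: b'_def c'_def)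
  then show ?case using Suc.prems(1) by auto
qed

definition dg :: "cmat2 \<Rightarrow> bool" where
  "dg A \<longleftrightarrow> (A$1$2 = 0 \<and> A$2$1 = 0) \<or> (A$1$1 = 0 \<and> A$2$2 = 0)"

lemma dg_mat2: "dg (mat2 a b c d) \<longleftrightarrow> (b = 0 \<and> c = 0) \<or> (a = 0 \<and> d = 0)"
  by (simp add: dg_def mat2_nth)

lemma dg_mult: "dg A \<Longrightarrow> dg B \<Longrightarrow> dg (A ** B)"
  apply (subst (asm) mat2_eta[of A], subst (asm) mat2_eta[of B])
  apply (subst mat2_eta[of A], subst mat2_eta[of B])
  unfolding mat2_mult dg_mat2 by auto

lemma dg_gen:
  assumes "\<forall>A\<in>S. det A = 1 \<and> dg A" "A \<in> gen_subgroup S"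
  shows "dg A"
  using assms(2)
proof induction
  case gen_one then show ?case by (simp add: mat2_one dg_mat2)
next
  case (gen_base A) then show ?case using assms by auto
next
  case (gen_inv A)
  then have "matrix_inv A = adj2 A" using assms adj2_inv by auto
  moreover have "dg A" using gen_inv assms by auto
  ultimately show ?case by (auto simp add: adj2_def dg_def mat2_nth)
next
  case (gen_mult A B) then show ?case using dg_mult by blast
qed

lemma dg_act:
  assumes "dg A" "det A = 1"
  shows "mob_act A (Bnd 0) \<in> {Bnd 0, Infty}"
proof -
  have d: "A$1$1 * A$2$2 - A$1$2 * A$2$1 = 1" using assms(2) by (simp add: det_2)
  show ?thesis
  proof (cases "A$1$2 = 0 \<and> A$2$1 = 0")
    case True
    then have "A$2$2 \<noteq> 0" using d by auto
    then show ?thesis using True by (simp add: mob_act_def Let_def)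
  next
    case False
    then have "A$1$1 = 0 \<and> A$2$2 = 0" using assms(1) by (auto simp: dg_def)
    then show ?thesis by (simp add: mob_act_def Let_def)
  qed
qed

lemma elem_of_dg:
  assumes "\<forall>A\<in>S. det A = 1 \<and> dg A"
  shows "elementary (gen_subgroup S)"
  unfolding elementary_def
proof (intro exI conjI)
  show "valid_hpoint (Bnd 0)" by (simp add: valid_hpoint_def)
  have "(\<lambda>A. mob_act A (Bnd 0)) ` gen_subgroup S \<subseteq> {Bnd 0, Infty}"
  proof
    fix p assume "p \<in> (\<lambda>A. mob_act A (Bnd 0)) ` gen_subgroup S"
    then obtain A where A: "A \<in> gen_subgroup S" "p = mob_act A (Bnd 0)" by auto
    have "det A = 1" using gen_props[of S A] A assms by auto
    then show "p \<in> {Bnd 0, Infty}" using dg_act dg_gen[OF assms A(1)] A(2) by auto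
  qed
  then show "finite ((\<lambda>A. mob_act A (Bnd 0)) ` gen_subgroup S)" by (rule finite_subset) auto
qed



theorem mainTheorem3:
  fixes lam a b c d :: complex
  assumes hlam: "cmod lam > 1"
    and hdet: "a * d - b * c = 1"
    and hM: "cmod (lam - 1) + cmod (inverse lam - 1) < 1"
    and hdisc: "discrete_group (gen_subgroup {mat2 lam 0 0 (inverse lam), mat2 a b c d})"
    and hnonel: "\<not> elementary (gen_subgroup {mat2 lam 0 0 (inverse lam), mat2 a b c d})"
  shows "let M = cmod (lam - 1) + cmod (inverse lam - 1) in
           sqrt (cmod (b * c)) > (1 - M) / M \<and>
           sqrt (cmod (1 + b * c)) > (1 - M) / M \<and>
           cmod (1 + b * c) + cmod (b * c) > 2 * (1 - M) / M\<^sup>2"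
proof -
  define g where "g = mat2 lam 0 0 (inverse lam)"
  define h where "h = mat2 a b c d"
  define G where "G = gen_subgroup {g, h}"
  note lf = lfacts[OF hlam]
  have detS: "\<forall>A\<in>{g,h}. det A = 1" using lf(1) hdet by (auto simp: g_def h_def mat2_det)
  have closed: "\<forall>A\<in>G. \<forall>B\<in>G. A ** B \<in> G" unfolding G_def by (auto intro: gen_subgroup.gen_mult)
  have adjG: "\<forall>A\<in>G. adj2 A \<in> G" unfolding G_def using gen_props[OF detS] by blast
  have gG: "mat2 lam 0 0 (inverse lam) \<in> G" unfolding G_def g_def by (auto intro: gen_subgroup.gen_base)
  have hG: "mat2 a b c d \<in> G" unfolding G_def h_def by (auto intro: gen_subgroup.gen_base)
  have disc: "discrete_group G" using hdisc by (simp add: G_def g_def h_def)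
  have nodg: "\<not> ((b=0 \<and> c=0) \<or> (a=0 \<and> d=0))"
  proof
    assume "(b=0 \<and> c=0) \<or> (a=0 \<and> d=0)"
    then have "\<forall>A\<in>{g,h}. det A = 1 \<and> dg A" using detS by (auto simp: g_def h_def dg_mat2)
    then have "elementary G" unfolding G_def by (rule elem_of_dg)
    then show False using hnonel by (simp add: G_def g_def h_def)
  qed
  define m where "m = cmod (lam - inverse lam)"
  define M where "M = cmod (lam - 1) + cmod (inverse lam - 1)"
  define s where "s = cmod (b*c)"
  define u where "u = cmod (1 + b*c)"
  have J1: "m\<^sup>2 * (1 + s) \<ge> 1"
  proof (rule ccontr)
    assume "\<not> ?thesis"
    then have "(cmod (lam - inverse lam))\<^sup>2 * (1 + cmod (b*c)) < 1" by (simp add: m_def s_def)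
    from jorg[OF closed adjG gG disc hlam hG hdet this] obtain n where
      "fst (snd ((stp lam ^^ n) (a,b,c,d))) = 0 \<and> fst (snd (snd ((stp lam ^^ n) (a,b,c,d)))) = 0" by blast
    then show False using back_lem[OF hlam hdet] nodg by blast
  qed
  define a1 where "a1 = lam*a*d - inverse lam*b*c"
  define b1 where "b1 = a*b*(inverse lam - lam)"
  define c1 where "c1 = c*d*(lam - inverse lam)"
  define d1 where "d1 = inverse lam*a*d - lam*b*c"
  have st: "stp lam (a,b,c,d) = (a1,b1,c1,d1)" by (simp add: stp_def a1_def b1_def c1_def d1_def)
  have det1: "a1*d1 - b1*c1 = 1" unfolding a1_def b1_def c1_def d1_def by (rule stp_det[OF hdet lf(1)])
  have "adj2 h \<in> G" using adjG hG unfolding h_def by blast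
  then have "h ** g ** adj2 h \<in> G" using closed gG hG unfolding g_def h_def by blast
  moreover have "h ** g ** adj2 h = mat2 a1 b1 c1 d1"
    by (simp add: g_def h_def mat2_mult mat2_eq_iff a1_def b1_def c1_def d1_def algebra_simps)
  ultimately have h1G: "mat2 a1 b1 c1 d1 \<in> G" by simp
  have ad: "a*d = 1 + b*c" using hdet by (simp add: algebra_simps)
  have nb1: "cmod (b1*c1) = s*u*m\<^sup>2"
  proof -
    have "b1*c1 = -((a*d)*(b*c)*(lam - inverse lam)^2)"
      by (simp add: b1_def c1_def power2_eq_square algebra_simps)
    then show ?thesis unfolding ad by (simp add: norm_mult norm_power s_def u_def m_def)
  qed
  have J2: "m\<^sup>2 * (1 + s*u*m\<^sup>2) \<ge> 1"
  proof (rule ccontr)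
    assume "\<not> ?thesis"
    then have "(cmod (lam - inverse lam))\<^sup>2 * (1 + cmod (b1*c1)) < 1" by (simp add: m_def nb1)
    from jorg[OF closed adjG gG disc hlam h1G det1 this] obtain n where
      "fst (snd ((stp lam ^^ n) (a1,b1,c1,d1))) = 0 \<and> fst (snd (snd ((stp lam ^^ n) (a1,b1,c1,d1)))) = 0" by blast
    then have "fst (snd ((stp lam ^^ Suc n) (a,b,c,d))) = 0 \<and> fst (snd (snd ((stp lam ^^ Suc n) (a,b,c,d)))) = 0"
      by (simp only: funpow_Suc_right comp_def st)
    then show False using back_lem[OF hlam hdet] nodg by blast
  qed
  have mM: "m \<le> M"
  proof -
    have "lam - inverse lam = (lam - 1) - (inverse lam - 1)" by simp
    then show ?thesis unfolding m_def M_def by (metis norm_triangle_ineq4)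
  qed
  have m0: "m > 0" using lf(2) by (simp add: m_def)
  have M1: "M < 1" using hM by (simp add: M_def)
  have s0: "s \<ge> 0" "u \<ge> 0" by (simp_all add: s_def u_def)
  have su: "s \<le> 1 + u"
  proof -
    have "b*c = (1 + b*c) - 1" by simp
    then have "cmod (b*c) \<le> cmod (1 + b*c) + cmod (1::complex)" by (metis norm_triangle_ineq4)
    then show ?thesis by (simp add: s_def u_def)
  qed
  have r1: "sqrt s > (1-M)/M" by (rule fin1[OF m0 mM M1 s0(1) J1])
  have r2: "sqrt u > (1-M)/M" by (rule fin2[OF m0 mM M1 s0 su J2])
  have r3: "u + s > 2*(1-M)/M\<^sup>2" by (rule fin3[OF m0 mM M1 s0 J2])
  show ?thesis using r1 r2 r3 unfolding Let_def M_def s_def u_def by simp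
qed

end
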